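(* For a triangle-free graph $G$ without isolated vertices, the following are equivalent: (1) $G$ is localizable; (2) $G$ is very well-covered; (3) $G$ has a perfect matching every edge of which is a strong clique; (4) $G$ has a perfect matching, and every edge of every perfect matching of $G$ is a strong clique.
   Context: A clique is strong if it intersects every maximal independent set. A graph is localizable if its vertex set admits a partition into strong cliques. A graph is well-covered if all its maximal independent sets have the same size, and very well-covered if it is well-covered, has no isolated vertices, and its independence number equals $|V(G)|/2$. *)

theory Defs
  imports Main "HOL-Library.Disjoint_Sets"
begin

definition graph :: "'a set \<Rightarrow> ('a \<Rightarrow> 'a \<Rightarrow> bool) \<Rightarrow> bool" where
  "graph V E \<longleftrightarrow> finite V \<and> (\<forall>u v. E u v \<longrightarrow> u \<in> V \<and> v \<in> V)
     \<and> (\<forall>u v. E u v \<longrightarrow> E v u) \<and> (\<forall>v. \<not> E v v)"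

definition independent_set :: "'a set \<Rightarrow> ('a \<Rightarrow> 'a \<Rightarrow> bool) \<Rightarrow> 'a set \<Rightarrow> bool" where
  "independent_set V E S \<longleftrightarrow> S \<subseteq> V \<and> (\<forall>u\<in>S. \<forall>v\<in>S. \<not> E u v)"

definition maximal_independent_set :: "'a set \<Rightarrow> ('a \<Rightarrow> 'a \<Rightarrow> bool) \<Rightarrow> 'a set \<Rightarrow> bool" where
  "maximal_independent_set V E S \<longleftrightarrow> independent_set V E S \<and>
     (\<forall>T. independent_set V E T \<and> S \<subseteq> T \<longrightarrow> T = S)"

definition clique :: "'a set \<Rightarrow> ('a \<Rightarrow> 'a \<Rightarrow> bool) \<Rightarrow> 'a set \<Rightarrow> bool" where
  "clique V E C \<longleftrightarrow> C \<subseteq> V \<and> (\<forall>u\<in>C. \<forall>v\<in>C. u \<noteq> v \<longrightarrow> E u v)"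

definition strong_clique :: "'a set \<Rightarrow> ('a \<Rightarrow> 'a \<Rightarrow> bool) \<Rightarrow> 'a set \<Rightarrow> bool" where
  "strong_clique V E C \<longleftrightarrow> clique V E C \<and>
     (\<forall>S. maximal_independent_set V E S \<longrightarrow> C \<inter> S \<noteq> {})"

definition localizable :: "'a set \<Rightarrow> ('a \<Rightarrow> 'a \<Rightarrow> bool) \<Rightarrow> bool" where
  "localizable V E \<longleftrightarrow> (\<exists>P. partition_on V P \<and> (\<forall>C\<in>P. strong_clique V E C))"

definition independence_number :: "'a set \<Rightarrow> ('a \<Rightarrow> 'a \<Rightarrow> bool) \<Rightarrow> nat" where
  "independence_number V E = Max (card ` {S. independent_set V E S})"

definition well_covered :: "'a set \<Rightarrow> ('a \<Rightarrow> 'a \<Rightarrow> bool) \<Rightarrow> bool" where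
  "well_covered V E \<longleftrightarrow> (\<forall>S T. maximal_independent_set V E S \<and> maximal_independent_set V E T
     \<longrightarrow> card S = card T)"

definition isolated_vertex :: "'a set \<Rightarrow> ('a \<Rightarrow> 'a \<Rightarrow> bool) \<Rightarrow> 'a \<Rightarrow> bool" where
  "isolated_vertex V E v \<longleftrightarrow> v \<in> V \<and> (\<forall>u. \<not> E v u)"

definition no_isolated_vertices :: "'a set \<Rightarrow> ('a \<Rightarrow> 'a \<Rightarrow> bool) \<Rightarrow> bool" where
  "no_isolated_vertices V E \<longleftrightarrow> (\<forall>v\<in>V. \<not> isolated_vertex V E v)"

definition very_well_covered :: "'a set \<Rightarrow> ('a \<Rightarrow> 'a \<Rightarrow> bool) \<Rightarrow> bool" where
  "very_well_covered V E \<longleftrightarrow> well_covered V E \<and> no_isolated_vertices V E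
     \<and> 2 * independence_number V E = card V"

definition triangle_free :: "'a set \<Rightarrow> ('a \<Rightarrow> 'a \<Rightarrow> bool) \<Rightarrow> bool" where
  "triangle_free V E \<longleftrightarrow> \<not> (\<exists>u v w. E u v \<and> E v w \<and> E u w)"

definition perfect_matching :: "'a set \<Rightarrow> ('a \<Rightarrow> 'a \<Rightarrow> bool) \<Rightarrow> 'a set set \<Rightarrow> bool" where
  "perfect_matching V E M \<longleftrightarrow> (\<forall>e\<in>M. \<exists>u v. e = {u, v} \<and> E u v)
     \<and> (\<forall>e\<in>M. \<forall>f\<in>M. e \<noteq> f \<longrightarrow> e \<inter> f = {}) \<and> \<Union>M = V"

end

theory Submission
  imports Defs
begin

lemma indep_sub: "graph V E \<Longrightarrow> independent_set V E S \<Longrightarrow> finite S"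
  unfolding graph_def independent_set_def using finite_subset by blast

lemma extend_indep:
  assumes g: "graph V E" and S: "independent_set V E S"
  shows "\<exists>T. maximal_independent_set V E T \<and> S \<subseteq> T"
proof -
  let ?A = "{T. independent_set V E T \<and> S \<subseteq> T}"
  have fin: "finite ?A"
    by (rule finite_subset[of _ "Pow V"]) (use g in \<open>auto simp: graph_def independent_set_def\<close>)
  have "?A \<noteq> {}" using S by auto
  then obtain T where T: "T \<in> ?A" "\<forall>b\<in>?A. T \<le> b \<longrightarrow> T = b"
    using finite_has_maximal[OF fin] by blast
  have Ti: "independent_set V E T" and ST: "S \<subseteq> T" using T(1) by auto
  have "\<forall>T'. independent_set V E T' \<and> T \<subseteq> T' \<longrightarrow> T' = T"
  proof (intro allI impI)
    fix T' assume h: "independent_set V E T' \<and> T \<subseteq> T'"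
    then have "T' \<in> ?A" using ST by auto
    then show "T' = T" using T(2) h by auto
  qed
  then show ?thesis unfolding maximal_independent_set_def using Ti ST by blast
qed

lemma alpha_props:
  assumes g: "graph V E"
  shows "\<exists>S. independent_set V E S \<and> card S = independence_number V E"
    and "independent_set V E S \<Longrightarrow> card S \<le> independence_number V E"
proof -
  let ?A = "{S. independent_set V E S}"
  have fin: "finite ?A"
    by (rule finite_subset[of _ "Pow V"]) (use g in \<open>auto simp: graph_def independent_set_def\<close>)
  have ne: "card ` ?A \<noteq> {}" by (auto simp: independent_set_def)
  have "Max (card ` ?A) \<in> card ` ?A" using Max_in[OF finite_imageI[OF fin] ne] .
  then obtain S0 where "S0 \<in> ?A" "card S0 = Max (card ` ?A)" by (metis imageE)
  then show "\<exists>S. independent_set V E S \<and> card S = independence_number V E"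
    unfolding independence_number_def by blast
  show "independent_set V E S \<Longrightarrow> card S \<le> independence_number V E"
  proof -
    assume "independent_set V E S"
    then have "card S \<in> card ` ?A" by blast
    then show ?thesis unfolding independence_number_def by (rule Max_ge[OF finite_imageI[OF fin]])
  qed
qed

lemma wc_card:
  assumes g: "graph V E" and wc: "well_covered V E" and S: "maximal_independent_set V E S"
  shows "card S = independence_number V E"
proof -
  obtain S0 where S0: "independent_set V E S0" "card S0 = independence_number V E"
    using alpha_props(1)[OF g] by blast
  have "\<forall>T. independent_set V E T \<and> S0 \<subseteq> T \<longrightarrow> T = S0"
  proof (intro allI impI)
    fix T assume T: "independent_set V E T \<and> S0 \<subseteq> T"
    have le: "card T \<le> card S0" using alpha_props(2)[OF g] T S0(2) by simp
    have fT: "finite T" using indep_sub[OF g] T by blast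
    have "card S0 \<le> card T" using card_mono[OF fT] T by blast
    then have "card S0 = card T" using le by simp
    then have "S0 = T" using card_subset_eq[OF fT, of S0] T by blast
    then show "T = S0" by simp
  qed
  then have M0: "maximal_independent_set V E S0"
    unfolding maximal_independent_set_def using S0(1) by blast
  have "card S = card S0" using wc S M0 unfolding well_covered_def by blast
  then show ?thesis using S0(2) by simp
qed

lemma pm_basic:
  assumes g: "graph V E" and M: "perfect_matching V E M"
  shows "finite M" and "card V = 2 * card M"
    and "independent_set V E S \<Longrightarrow> card S = (\<Sum>e\<in>M. card (e \<inter> S))"
    and "independent_set V E S \<Longrightarrow> e \<in> M \<Longrightarrow> card (e \<inter> S) \<le> 1"
proof -
  have finV: "finite V" using g by (simp add: graph_def)
  have U: "\<Union>M = V" and ed: "\<forall>e\<in>M. \<exists>u v. e = {u, v} \<and> E u v"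
    and dj: "\<forall>e\<in>M. \<forall>f\<in>M. e \<noteq> f \<longrightarrow> e \<inter> f = {}"
    using M by (auto simp: perfect_matching_def)
  show finM: "finite M"
    by (rule finite_subset[of _ "Pow V"]) (use U finV in auto)
  have fine: "\<forall>e\<in>M. finite e" using ed by auto
  have "card (\<Union>e\<in>M. e) = (\<Sum>e\<in>M. card e)"
    by (rule card_UN_disjoint) (use finM fine dj in auto)
  moreover have "\<forall>e\<in>M. card e = 2"
  proof
    fix e assume "e \<in> M"
    then obtain u v where "e = {u, v}" "E u v" using ed by blast
    moreover have "u \<noteq> v" using g \<open>E u v\<close> by (auto simp: graph_def)
    ultimately show "card e = 2" by simp
  qed
  ultimately show "card V = 2 * card M" using U by simp
  show "independent_set V E S \<Longrightarrow> card S = (\<Sum>e\<in>M. card (e \<inter> S))"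
  proof -
    assume S: "independent_set V E S"
    have "S = (\<Union>e\<in>M. e \<inter> S)" using S U by (auto simp: independent_set_def)
    moreover have "card (\<Union>e\<in>M. e \<inter> S) = (\<Sum>e\<in>M. card (e \<inter> S))"
      by (rule card_UN_disjoint) (use finM fine dj in auto)
    ultimately show ?thesis by simp
  qed
  show "independent_set V E S \<Longrightarrow> e \<in> M \<Longrightarrow> card (e \<inter> S) \<le> 1"
  proof -
    assume S: "independent_set V E S" and e: "e \<in> M"
    then obtain u v where uv: "e = {u, v}" "E u v" using ed by blast
    have "\<not> (u \<in> S \<and> v \<in> S)" using S uv by (auto simp: independent_set_def)
    then have "e \<inter> S \<subseteq> {u} \<or> e \<inter> S \<subseteq> {v}" using uv by auto
    then show ?thesis
    proof
      assume h: "e \<inter> S \<subseteq> {u}"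
      have "card (e \<inter> S) \<le> card {u}" by (rule card_mono) (simp_all add: h)
      then show ?thesis by simp
    next
      assume h: "e \<inter> S \<subseteq> {v}"
      have "card (e \<inter> S) \<le> card {v}" by (rule card_mono) (simp_all add: h)
      then show ?thesis by simp
    qed
  qed
qed

lemma sum_all_one:
  fixes f :: "'b \<Rightarrow> nat"
  assumes "finite M" "\<forall>e\<in>M. f e \<le> 1" "(\<Sum>e\<in>M. f e) = card M"
  shows "\<forall>e\<in>M. f e = 1"
proof (rule ccontr)
  assume "\<not> (\<forall>e\<in>M. f e = 1)"
  then have "\<exists>e\<in>M. f e < 1" using assms(2) by force
  then have "(\<Sum>e\<in>M. f e) < (\<Sum>e\<in>M. 1)"
    by (intro sum_strict_mono_ex1) (use assms in auto)
  then show False using assms(3) by simp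
qed

lemma strong_edge:
  assumes g: "graph V E" and tf: "triangle_free V E" and ni: "no_isolated_vertices V E"
    and C: "strong_clique V E C"
  shows "\<exists>u v. C = {u, v} \<and> E u v"
proof -
  have cl: "C \<subseteq> V" "\<forall>u\<in>C. \<forall>v\<in>C. u \<noteq> v \<longrightarrow> E u v"
    and st: "\<forall>S. maximal_independent_set V E S \<longrightarrow> C \<inter> S \<noteq> {}"
    using C by (auto simp: strong_clique_def clique_def)
  obtain S0 where "maximal_independent_set V E S0"
    using extend_indep[OF g, of "{}"] by (auto simp: independent_set_def)
  then obtain u where u: "u \<in> C" using st by blast
  then have "u \<in> V" using cl by auto
  then obtain w where w: "E u w" using ni by (auto simp: no_isolated_vertices_def isolated_vertex_def)
  have "independent_set V E {w}" using g w by (auto simp: independent_set_def graph_def)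
  then obtain Sw where Sw: "maximal_independent_set V E Sw" "w \<in> Sw"
    using extend_indep[OF g] by blast
  have "u \<notin> Sw" using Sw w by (auto simp: maximal_independent_set_def independent_set_def)
  then obtain x where x: "x \<in> C" "x \<noteq> u" using st Sw by blast
  have ux: "E u x" using cl u x by auto
  have "C = {u, x}"
  proof (rule ccontr)
    assume "C \<noteq> {u, x}"
    then obtain z where "z \<in> C" "z \<noteq> u" "z \<noteq> x" using u x by blast
    then have "E x z" "E u z" using cl u x by auto
    then show False using tf ux by (auto simp: triangle_free_def)
  qed
  then show ?thesis using ux by blast
qed

lemma wc_match:
  assumes "graph V E" and "no_isolated_vertices V E"
    and "\<forall>S. maximal_independent_set V E S \<longrightarrow> card S = m"
  shows "2 * m \<le> card V \<and> (2 * m = card V \<longrightarrow> (\<exists>M. perfect_matching V E M))"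
  using assms
proof (induction "card V" arbitrary: V E m rule: less_induct)
  case less
  have g: "graph V E" and ni: "no_isolated_vertices V E"
    and wc: "\<forall>S. maximal_independent_set V E S \<longrightarrow> card S = m" using less.prems by auto
  have finV: "finite V" and EV: "\<And>a b. E a b \<Longrightarrow> a \<in> V \<and> b \<in> V"
    and Es: "\<And>a b. E a b \<Longrightarrow> E b a" and Ei: "\<And>a. \<not> E a a"
    using g by (auto simp: graph_def)
  show ?case
  proof (cases "V = {}")
    case True
    have "maximal_independent_set V E {}"
      using True by (auto simp: maximal_independent_set_def independent_set_def)
    then have "m = 0" using wc by auto
    moreover have "perfect_matching V E {}" using True by (auto simp: perfect_matching_def)
    ultimately show ?thesis using True by auto
  next
    case False
    define N where "N x = {u. E x u}" for x
    have NV: "N x \<subseteq> V" for x using EV by (auto simp: N_def)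
    have finN: "finite (N x)" for x using NV finV finite_subset by blast
    define c where "c = Min ((\<lambda>x. card (N x)) ` V)"
    have "c \<in> (\<lambda>x. card (N x)) ` V" unfolding c_def using False finV by (intro Min_in) auto
    then obtain v where v: "v \<in> V" "card (N v) = c" by blast
    have vmin: "\<And>x. x \<in> V \<Longrightarrow> card (N v) \<le> card (N x)"
      unfolding v(2) c_def using finV by (intro Min_le) auto
    define K where "K = N v"
    define D where "D = {x\<in>V. N x = K}"
    have vD: "v \<in> D" using v by (auto simp: D_def K_def)
    have KV: "K \<subseteq> V" using NV by (simp add: K_def)
    have DV: "D \<subseteq> V" by (auto simp: D_def)
    have Dn: "\<And>d u. d \<in> D \<Longrightarrow> E d u \<longleftrightarrow> u \<in> K" by (auto simp: D_def N_def)
    have DK: "D \<inter> K = {}"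
    proof (rule ccontr)
      assume "D \<inter> K \<noteq> {}"
      then obtain x where x: "x \<in> D" "x \<in> K" by blast
      then have "E v x" by (simp add: K_def N_def)
      then have "v \<in> K" using Dn[OF x(1)] Es by blast
      then show False using Ei by (simp add: K_def N_def)
    qed
    have finD: "finite D" and finK: "finite K" using DV KV finV finite_subset by auto
    have Kne: "K \<noteq> {}" using ni v by (auto simp: no_isolated_vertices_def isolated_vertex_def K_def N_def)
    then obtain k where k: "k \<in> K" by blast
    have "independent_set V E {k}" using k KV Ei by (auto simp: independent_set_def)
    then obtain Y0 where Y0: "maximal_independent_set V E Y0" "k \<in> Y0"
      using extend_indep[OF g] by blast
    have Y0i: "independent_set V E Y0" using Y0 by (simp add: maximal_independent_set_def)
    have finY0: "finite Y0" using indep_sub[OF g Y0i] .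
    have DY0: "D \<inter> Y0 = {}"
    proof (rule ccontr)
      assume "D \<inter> Y0 \<noteq> {}"
      then obtain d where d: "d \<in> D" "d \<in> Y0" by blast
      then have "E d k" using Dn k by blast
      then show False using d Y0 Y0i by (auto simp: independent_set_def)
    qed
    have Xi: "independent_set V E ((Y0 - K) \<union> D)"
      unfolding independent_set_def
    proof (intro conjI ballI notI)
      show "Y0 - K \<union> D \<subseteq> V" using Y0i DV by (auto simp: independent_set_def)
      fix a b assume a: "a \<in> Y0 - K \<union> D" and b: "b \<in> Y0 - K \<union> D" and ab: "E a b"
      show False
      proof (cases "a \<in> D")
        case True then have "b \<in> K" using Dn ab by blast
        then show False using b DK by auto
      next
        case aD: False
        show False
        proof (cases "b \<in> D")
          case True then have "a \<in> K" using Dn ab Es by blast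
          then show False using a aD by auto
        next
          case False then show False using a b aD ab Y0i by (auto simp: independent_set_def)
        qed
      qed
    qed
    then obtain Y1 where Y1: "maximal_independent_set V E Y1" "(Y0 - K) \<union> D \<subseteq> Y1"
      using extend_indep[OF g] by blast
    have finY1: "finite Y1" using indep_sub[OF g] Y1 by (auto simp: maximal_independent_set_def)
    have "card ((Y0 - K) \<union> D) = card (Y0 - K) + card D"
      by (rule card_Un_disjoint) (use finY0 finD DY0 in auto)
    moreover have "card ((Y0 - K) \<union> D) \<le> card Y1" using Y1(2) finY1 card_mono by blast
    moreover have "card Y1 = card Y0" using wc Y1 Y0 by auto
    moreover have "card Y0 = card (Y0 - K) + card (Y0 \<inter> K)"
    proof -
      have "card ((Y0 - K) \<union> (Y0 \<inter> K)) = card (Y0 - K) + card (Y0 \<inter> K)"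
        by (rule card_Un_disjoint) (use finY0 in auto)
      then show ?thesis by (simp add: Un_Diff_Int)
    qed
    moreover have "card (Y0 \<inter> K) \<le> card K" using finK by (simp add: card_mono)
    ultimately have DleK: "card D \<le> card K" by linarith
    define V' where "V' = V - D - K"
    define E' where "E' = (\<lambda>a b. E a b \<and> a \<in> V' \<and> b \<in> V')"
    have g': "graph V' E'" using finV Es Ei by (auto simp: graph_def E'_def V'_def)
    have ni': "no_isolated_vertices V' E'"
      unfolding no_isolated_vertices_def isolated_vertex_def
    proof (intro ballI notI)
      fix x assume x: "x \<in> V'" and iso: "x \<in> V' \<and> (\<forall>u. \<not> E' x u)"
      have xV: "x \<in> V" "x \<notin> D" "x \<notin> K" using x by (auto simp: V'_def)
      have "\<not> N x \<subseteq> K"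
      proof
        assume sub: "N x \<subseteq> K"
        have "card (N x) \<le> card K" using sub finK card_mono by blast
        moreover have "card K \<le> card (N x)" using vmin[OF xV(1)] by (simp add: K_def)
        ultimately have "N x = K" using sub finK card_subset_eq by (metis le_antisym)
        then show False using xV by (auto simp: D_def)
      qed
      then obtain u where u: "E x u" "u \<notin> K" by (auto simp: N_def)
      have "u \<notin> D" using u Dn Es xV(3) by blast
      then have "E' x u" using u EV xV x by (auto simp: E'_def V'_def)
      then show False using iso by blast
    qed
    have lift: "maximal_independent_set V E (J \<union> D) \<and> card (J \<union> D) = card J + card D"
      if J: "maximal_independent_set V' E' J" for J
    proof -
      have Ji: "J \<subseteq> V'" "\<forall>a\<in>J. \<forall>b\<in>J. \<not> E' a b"
        using J by (auto simp: maximal_independent_set_def independent_set_def)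
      have JDi: "independent_set V E (J \<union> D)"
        unfolding independent_set_def
      proof (intro conjI ballI)
        show "J \<union> D \<subseteq> V" using Ji DV by (auto simp: V'_def)
        fix a b assume a: "a \<in> J \<union> D" and b: "b \<in> J \<union> D"
        show "\<not> E a b"
        proof
          assume ab: "E a b"
          show False
          proof (cases "a \<in> D")
            case True
            then have "b \<in> K" using Dn ab by blast
            then show False using b Ji DK by (auto simp: V'_def)
          next
            case aJ: False
            show False
            proof (cases "b \<in> D")
              case True
              then have "a \<in> K" using Dn ab Es by blast
              then show False using a aJ Ji by (auto simp: V'_def)
            next
              case False
              then show False using a b aJ Ji ab by (auto simp: E'_def)
            qed
          qed
        qed
      qed
      have "maximal_independent_set V E (J \<union> D)"
        unfolding maximal_independent_set_def
      proof (intro conjI allI impI)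
        fix T assume T: "independent_set V E T \<and> J \<union> D \<subseteq> T"
        have TK: "T \<inter> K = {}"
        proof (rule ccontr)
          assume "T \<inter> K \<noteq> {}"
          then obtain t where "t \<in> T" "t \<in> K" by blast
          then have "E v t" "v \<in> T" using vD T by (auto simp: K_def N_def)
          then show False using T \<open>t \<in> T\<close> by (auto simp: independent_set_def)
        qed
        have "independent_set V' E' (T \<inter> V') \<and> J \<subseteq> T \<inter> V'"
          using T Ji by (auto simp: independent_set_def E'_def)
        then have "T \<inter> V' = J" using J by (auto simp: maximal_independent_set_def)
        moreover have "T \<subseteq> V" using T by (auto simp: independent_set_def)
        ultimately show "T = J \<union> D" using T TK by (auto simp: V'_def)
      qed (fact JDi)
      moreover have "card (J \<union> D) = card J + card D"
        by (rule card_Un_disjoint) (use Ji finV finD in \<open>auto simp: V'_def intro: finite_subset\<close>)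
      ultimately show ?thesis by blast
    qed
    obtain J0 where J0: "maximal_independent_set V' E' J0"
      using extend_indep[OF g', of "{}"] by (auto simp: independent_set_def)
    define m' where "m' = card J0"
    have mm: "m = m' + card D" using lift[OF J0] wc by (auto simp: m'_def)
    have wc': "\<forall>S. maximal_independent_set V' E' S \<longrightarrow> card S = m'"
      using lift wc mm by fastforce
    have "card V' < card V"
      using vD finV DV by (intro psubset_card_mono) (auto simp: V'_def)
    from less.hyps[OF this g' ni' wc']
    have IH: "2 * m' \<le> card V'" "2 * m' = card V' \<longrightarrow> (\<exists>M. perfect_matching V' E' M)" by auto
    have VU: "V = V' \<union> D \<union> K" using DV KV by (auto simp: V'_def)
    have cV: "card V = card V' + card D + card K"
    proof -
      have "card (V' \<union> D) = card V' + card D"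
        by (rule card_Un_disjoint) (use finV finD in \<open>auto simp: V'_def\<close>)
      moreover have "card (V' \<union> D \<union> K) = card (V' \<union> D) + card K"
        by (rule card_Un_disjoint) (use finV finD finK DK in \<open>auto simp: V'_def\<close>)
      ultimately show ?thesis using VU by simp
    qed
    have part1: "2 * m \<le> card V" using IH(1) mm cV DleK by linarith
    have part2: "\<exists>M. perfect_matching V E M" if eq: "2 * m = card V"
    proof -
      have cDK: "card K = card D" and "2 * m' = card V'" using IH(1) mm cV DleK eq by linarith+
      then obtain M' where M': "perfect_matching V' E' M'" using IH(2) by blast
      obtain f where f: "bij_betw f D K" using finite_same_card_bij[OF finD finK] cDK by auto
      have fK: "\<And>d. d \<in> D \<Longrightarrow> f d \<in> K" using f by (auto simp: bij_betw_def)
      have finj: "inj_on f D" using f by (auto simp: bij_betw_def)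
      have fimg: "f ` D = K" using f by (auto simp: bij_betw_def)
      have M'e: "\<forall>e\<in>M'. \<exists>u w. e = {u, w} \<and> E' u w" and M'd: "\<forall>e\<in>M'. \<forall>e2\<in>M'. e \<noteq> e2 \<longrightarrow> e \<inter> e2 = {}"
        and M'U: "\<Union>M' = V'" using M' by (auto simp: perfect_matching_def)
      define M where "M = M' \<union> (\<lambda>d. {d, f d}) ` D"
      have "perfect_matching V E M"
        unfolding perfect_matching_def
      proof (intro conjI)
        show "\<forall>e\<in>M. \<exists>u w. e = {u, w} \<and> E u w"
        proof
          fix e assume "e \<in> M"
          then show "\<exists>u w. e = {u, w} \<and> E u w"
          proof (cases "e \<in> M'")
            case True then show ?thesis using M'e True unfolding E'_def by blast
          next
            case False
            then obtain d where "d \<in> D" "e = {d, f d}" using \<open>e \<in> M\<close> by (auto simp: M_def)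
            then show ?thesis using Dn[of d "f d"] fK[of d] by blast
          qed
        qed
        show "\<forall>e\<in>M. \<forall>e2\<in>M. e \<noteq> e2 \<longrightarrow> e \<inter> e2 = {}"
        proof (intro ballI impI)
          fix e e2 assume e: "e \<in> M" and e2: "e2 \<in> M" and ne: "e \<noteq> e2"
          have sub': "\<And>x. x \<in> M' \<Longrightarrow> x \<subseteq> V'" using M'U by blast
          have dk: "{d, f d} \<inter> V' = {}" if "d \<in> D" for d
            using fK[OF that] that by (auto simp: V'_def)
          show "e \<inter> e2 = {}"
          proof (cases "e \<in> M'")
            case eM: True
            show ?thesis
            proof (cases "e2 \<in> M'")
              case True then show ?thesis using M'd eM ne by blast
            next
              case False
              then obtain d where "d \<in> D" "e2 = {d, f d}" using e2 by (auto simp: M_def)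
              then show ?thesis using sub'[OF eM] dk by blast
            qed
          next
            case eN: False
            then obtain d where d: "d \<in> D" "e = {d, f d}" using e by (auto simp: M_def)
            show ?thesis
            proof (cases "e2 \<in> M'")
              case True then show ?thesis using sub'[OF True] dk d by blast
            next
              case False
              then obtain d2 where d2: "d2 \<in> D" "e2 = {d2, f d2}" using e2 by (auto simp: M_def)
              have "d \<noteq> d2" using d d2 ne by auto
              then have "f d \<noteq> f d2" using finj d d2 by (auto simp: inj_on_def)
              moreover have "f d \<notin> D" "f d2 \<notin> D" using fK d d2 DK by auto
              ultimately show ?thesis using d d2 \<open>d \<noteq> d2\<close> by auto
            qed
          qed
        qed
        have "\<Union>((\<lambda>d. {d, f d}) ` D) = D \<union> f ` D" by blast
        then show "\<Union>M = V" unfolding M_def Union_Un_distrib using M'U fimg VU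
          by (simp add: Un_assoc)
      qed
      then show ?thesis by blast
    qed
    show ?thesis using part1 part2 by blast
  qed
qed

theorem mainTheorem8:
  fixes V :: "'a set" and E :: "'a \<Rightarrow> 'a \<Rightarrow> bool"
  assumes "graph V E" and "triangle_free V E" and "no_isolated_vertices V E"
  shows "(localizable V E \<longleftrightarrow> very_well_covered V E)
    \<and> (very_well_covered V E \<longleftrightarrow>
         (\<exists>M. perfect_matching V E M \<and> (\<forall>e\<in>M. strong_clique V E e)))
    \<and> ((\<exists>M. perfect_matching V E M \<and> (\<forall>e\<in>M. strong_clique V E e)) \<longleftrightarrow>
         ((\<exists>M. perfect_matching V E M) \<and>
          (\<forall>M. perfect_matching V E M \<longrightarrow> (\<forall>e\<in>M. strong_clique V E e))))"
proof -
  have g: "graph V E" and tf: "triangle_free V E" and ni: "no_isolated_vertices V E"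
    using assms by auto
  have Es: "\<And>a b. E a b \<Longrightarrow> E b a" and EV: "\<And>a b. E a b \<Longrightarrow> a \<in> V \<and> b \<in> V"
    using g by (auto simp: graph_def)
  have A13: "localizable V E \<longleftrightarrow> (\<exists>M. perfect_matching V E M \<and> (\<forall>e\<in>M. strong_clique V E e))"
  proof
    assume "localizable V E"
    then obtain P where P: "partition_on V P" "\<forall>C\<in>P. strong_clique V E C"
      by (auto simp: localizable_def)
    have "perfect_matching V E P"
      unfolding perfect_matching_def
    proof (intro conjI)
      show "\<forall>e\<in>P. \<exists>u v. e = {u, v} \<and> E u v" using P(2) strong_edge[OF g tf ni] by blast
      show "\<forall>e\<in>P. \<forall>f\<in>P. e \<noteq> f \<longrightarrow> e \<inter> f = {}"
        using P(1) by (auto simp: partition_on_def disjoint_def)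
      show "\<Union>P = V" using P(1) by (auto simp: partition_on_def)
    qed
    then show "\<exists>M. perfect_matching V E M \<and> (\<forall>e\<in>M. strong_clique V E e)" using P by blast
  next
    assume "\<exists>M. perfect_matching V E M \<and> (\<forall>e\<in>M. strong_clique V E e)"
    then obtain M where M: "perfect_matching V E M" "\<forall>e\<in>M. strong_clique V E e" by blast
    have "partition_on V M"
      using M(1) unfolding partition_on_def perfect_matching_def disjoint_def by blast
    then show "localizable V E" using M by (auto simp: localizable_def)
  qed
  have A32: "very_well_covered V E"
    if h: "\<exists>M. perfect_matching V E M \<and> (\<forall>e\<in>M. strong_clique V E e)"
  proof -
    obtain M where M: "perfect_matching V E M" "\<forall>e\<in>M. strong_clique V E e" using h by blast
    note pb = pm_basic[OF g M(1)]
    have cS: "card S = card M" if S: "maximal_independent_set V E S" for S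
    proof -
      have Si: "independent_set V E S" using S by (simp add: maximal_independent_set_def)
      have "\<forall>e\<in>M. card (e \<inter> S) = 1"
      proof
        fix e assume e: "e \<in> M"
        have "e \<inter> S \<noteq> {}" using M(2) e S by (auto simp: strong_clique_def)
        moreover have "finite (e \<inter> S)" using indep_sub[OF g Si] by simp
        ultimately have "card (e \<inter> S) \<ge> 1" by (simp add: Suc_leI card_gt_0_iff)
        then show "card (e \<inter> S) = 1" using pb(4)[OF Si e] by simp
      qed
      then show ?thesis using pb(3)[OF Si] by simp
    qed
    have wc: "well_covered V E" using cS by (auto simp: well_covered_def)
    obtain S where S: "maximal_independent_set V E S"
      using extend_indep[OF g, of "{}"] by (auto simp: independent_set_def)
    have "independence_number V E = card M" using wc_card[OF g wc S] cS[OF S] by simp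
    then show ?thesis using wc ni pb(2) by (auto simp: very_well_covered_def)
  qed
  have A24: "(\<exists>M. perfect_matching V E M) \<and>
          (\<forall>M. perfect_matching V E M \<longrightarrow> (\<forall>e\<in>M. strong_clique V E e))"
    if vwc: "very_well_covered V E"
  proof -
    have wc: "well_covered V E" and al: "2 * independence_number V E = card V"
      using vwc by (auto simp: very_well_covered_def)
    have "\<forall>S. maximal_independent_set V E S \<longrightarrow> card S = independence_number V E"
      using wc_card[OF g wc] by blast
    from wc_match[OF g ni this] al have ex: "\<exists>M. perfect_matching V E M" by auto
    have "\<forall>e\<in>M. strong_clique V E e" if M: "perfect_matching V E M" for M
    proof
      fix e assume e: "e \<in> M"
      note pb = pm_basic[OF g M]
      have aM: "independence_number V E = card M" using pb(2) al by simp
      have cl: "clique V E e"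
      proof -
        obtain u w where uw: "e = {u, w}" "E u w" using M e by (auto simp: perfect_matching_def)
        then show ?thesis using Es EV by (auto simp: clique_def)
      qed
      have "e \<inter> S \<noteq> {}" if S: "maximal_independent_set V E S" for S
      proof -
        have Si: "independent_set V E S" using S by (simp add: maximal_independent_set_def)
        have "(\<Sum>e\<in>M. card (e \<inter> S)) = card M"
          using pb(3)[OF Si] wc_card[OF g wc S] aM by simp
        then have "\<forall>e\<in>M. card (e \<inter> S) = 1"
          using sum_all_one[OF pb(1), of "\<lambda>e. card (e \<inter> S)"] pb(4)[OF Si] by blast
        then have "card (e \<inter> S) = 1" using e by blast
        then show ?thesis by (metis card.empty zero_neq_one)
      qed
      then show "strong_clique V E e" using cl by (auto simp: strong_clique_def)
    qed
    then show ?thesis using ex by blast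
  qed
  have A43: "\<exists>M. perfect_matching V E M \<and> (\<forall>e\<in>M. strong_clique V E e)"
    if "(\<exists>M. perfect_matching V E M) \<and>
          (\<forall>M. perfect_matching V E M \<longrightarrow> (\<forall>e\<in>M. strong_clique V E e))"
    using that by blast
  have B: "very_well_covered V E \<longleftrightarrow> (\<exists>M. perfect_matching V E M \<and> (\<forall>e\<in>M. strong_clique V E e))"
  proof
    assume "very_well_covered V E"
    then show "\<exists>M. perfect_matching V E M \<and> (\<forall>e\<in>M. strong_clique V E e)"
      by (rule A43[OF A24])
  next
    assume "\<exists>M. perfect_matching V E M \<and> (\<forall>e\<in>M. strong_clique V E e)"
    then show "very_well_covered V E" by (rule A32)
  qed
  have C: "(\<exists>M. perfect_matching V E M \<and> (\<forall>e\<in>M. strong_clique V E e)) \<longleftrightarrow>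
         ((\<exists>M. perfect_matching V E M) \<and>
          (\<forall>M. perfect_matching V E M \<longrightarrow> (\<forall>e\<in>M. strong_clique V E e)))"
  proof
    assume "\<exists>M. perfect_matching V E M \<and> (\<forall>e\<in>M. strong_clique V E e)"
    then show "(\<exists>M. perfect_matching V E M) \<and>
          (\<forall>M. perfect_matching V E M \<longrightarrow> (\<forall>e\<in>M. strong_clique V E e))"
      by (rule A24[OF A32])
  next
    assume "(\<exists>M. perfect_matching V E M) \<and>
          (\<forall>M. perfect_matching V E M \<longrightarrow> (\<forall>e\<in>M. strong_clique V E e))"
    then show "\<exists>M. perfect_matching V E M \<and> (\<forall>e\<in>M. strong_clique V E e)" by (rule A43)
  qed
  have L: "localizable V E \<longleftrightarrow> very_well_covered V E" using A13 B by (simp only:)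
  show ?thesis using L B C by (intro conjI)
qed

end
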